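(* Let $r_{\rm A}>0$ and $\theta_{\rm A}\in\,]0,\pi/2[$. The function $$T_D^S(\eta)=\int_{\theta_{\rm A}}^{\pi-\theta_{\rm A}}\frac{r_{\rm A}^{3/2}(1-\eta\sin\theta_{\rm A})^{3/2}}{(1-\eta\sin\theta)^2}\,{\rm d}\theta,\qquad\eta\in\,]-\infty,1[,$$ is strictly convex, with ${\rm d}^2T_D^S/{\rm d}\eta^2>0$ everywhere.
   Context: $T_D^S(\eta)$ is the elapsed time, for the Kepler problem $\ddot q=-q/|q|^3$ with center ${\rm O}$ at the origin, of the direct Keplerian arc from ${\rm A}=(r_{\rm A}\cos\theta_{\rm A},r_{\rm A}\sin\theta_{\rm A})$ to ${\rm B}=(-r_{\rm A}\cos\theta_{\rm A},r_{\rm A}\sin\theta_{\rm A})$ on the conic with polar equation $r=r_{\rm A}(1-\eta\sin\theta_{\rm A})/(1-\eta\sin\theta)$; $\eta$ is the signed eccentricity. *)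

theory Defs
  imports "HOL-Analysis.Analysis"
begin

text \<open>Elapsed time of the direct Keplerian arc from A to B as a function of the signed
  eccentricity eta, given by the integral formula of the paper.\<close>
definition TDS :: "real \<Rightarrow> real \<Rightarrow> real \<Rightarrow> real" where
  "TDS rA thA eta = integral {thA .. pi - thA}
     (\<lambda>\<theta>. rA powr (3/2) * (1 - eta * sin thA) powr (3/2) / (1 - eta * sin \<theta>)\<^sup>2)"

definition strictly_convex_on :: "real set \<Rightarrow> (real \<Rightarrow> real) \<Rightarrow> bool" where
  "strictly_convex_on S f \<longleftrightarrow>
     (\<forall>x\<in>S. \<forall>y\<in>S. x \<noteq> y \<longrightarrow> (\<forall>u::real. 0 < u \<and> u < 1 \<longrightarrow>
        f ((1 - u) * x + u * y) < (1 - u) * f x + u * f y))"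

end

theory Submission
  imports Defs
begin

lemma convex_from_deriv:
  fixes T T' T'' :: "real \<Rightarrow> real"
  assumes d1: "\<And>x. x < 1 \<Longrightarrow> (T has_real_derivative T' x) (at x)"
    and d2: "\<And>x. x < 1 \<Longrightarrow> (T' has_real_derivative T'' x) (at x)"
    and pos: "\<And>x. x < 1 \<Longrightarrow> T'' x > 0"
  shows "strictly_convex_on {..<1} T"
proof -
  have inc: "T' a < T' b" if "a < b" "b < 1" for a b
  proof (rule DERIV_pos_imp_increasing[OF that(1)])
    fix x assume "a \<le> x" "x \<le> b"
    hence "x < 1" using that by simp
    thus "\<exists>y. DERIV T' x :> y \<and> 0 < y" using d2 pos by blast
  qed
  have key: "T ((1 - u) * x + u * y) < (1 - u) * T x + u * T y"
    if xy: "x < y" "y < 1" and u: "0 < u" "u < 1" for x y u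
  proof -
    define z where "z = (1 - u) * x + u * y"
    have e1: "z - x = u * (y - x)" unfolding z_def by (simp add: algebra_simps)
    have e2: "y - z = (1 - u) * (y - x)" unfolding z_def by (simp add: algebra_simps)
    have g1: "u * (y - x) > 0" using xy u by simp
    have g2: "(1 - u) * (y - x) > 0" using xy u by simp
    have xz: "x < z" using e1 g1 by linarith
    have zy: "z < y" using e2 g2 by linarith
    obtain p where p: "x < p" "p < z" "T z - T x = (z - x) * T' p"
      using MVT2[OF xz, of T T'] d1 zy xy by force
    obtain q where q: "z < q" "q < y" "T y - T z = (y - z) * T' q"
      using MVT2[OF zy, of T T'] d1 xy by force
    have pq: "T' p < T' q" using inc p q xy by simp
    have A: "T z - T x = u * (y - x) * T' p" using p(3) e1 by simp
    have B: "T y - T z = (1 - u) * (y - x) * T' q" using q(3) e2 by simp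
    have C: "(1 - u) * T x + u * T y - T z = u * (T y - T z) - (1 - u) * (T z - T x)"
      by (simp add: algebra_simps)
    have "(1 - u) * T x + u * T y - T z = u * (1 - u) * (y - x) * (T' q - T' p)"
      unfolding C A B by (simp add: algebra_simps)
    moreover have "u * (1 - u) * (y - x) * (T' q - T' p) > 0"
      using xy u pq by simp
    ultimately show ?thesis unfolding z_def by linarith
  qed
  show ?thesis unfolding strictly_convex_on_def
  proof (intro ballI impI allI)
    fix x y :: real and u :: real assume xy: "x \<in> {..<1}" "y \<in> {..<1}" "x \<noteq> y" and u: "0 < u \<and> u < 1"
    show "T ((1 - u) * x + u * y) < (1 - u) * T x + u * T y"
    proof (cases "x < y")
      case True thus ?thesis using key[of x y u] xy u by auto
    next
      case False
      hence yx: "y < x" using xy by auto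
      have "T ((1 - (1 - u)) * y + (1 - u) * x) < (1 - (1 - u)) * T y + (1 - u) * T x"
        using key[OF yx, of "1 - u"] xy u by simp
      thus ?thesis by (simp add: algebra_simps)
    qed
  qed
qed

lemma sin_ge_thA:
  assumes "0 < thA" "thA < pi/2" "\<theta> \<in> {thA..pi-thA}"
  shows "sin thA \<le> sin \<theta>"
proof (cases "\<theta> \<le> pi/2")
  case True thus ?thesis using assms by (intro sin_monotone_2pi_le) auto
next
  case False
  have "sin thA \<le> sin (pi - \<theta>)" using assms False by (intro sin_monotone_2pi_le) auto
  thus ?thesis by simp
qed

definition F :: "real \<Rightarrow> real \<Rightarrow> real \<Rightarrow> real \<Rightarrow> real" where
  "F a K e s = K * sqrt(1 - e * a) ^ 3 / (1 - e * s)^2"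
definition F1 :: "real \<Rightarrow> real \<Rightarrow> real \<Rightarrow> real \<Rightarrow> real" where
  "F1 a K e s = K * (-(3/2) * a * sqrt(1 - e * a) / (1 - e * s)^2 + 2 * s * sqrt(1 - e * a) ^ 3 / (1 - e * s)^3)"
definition F2 :: "real \<Rightarrow> real \<Rightarrow> real \<Rightarrow> real \<Rightarrow> real" where
  "F2 a K e s = K * ((3/4) * a^2 / sqrt(1 - e * a) / (1 - e * s)^2 - 6 * a * s * sqrt(1 - e * a) / (1 - e * s)^3 + 6 * s^2 * sqrt(1 - e * a) ^ 3 / (1 - e * s)^4)"

lemma dF: assumes "1 - e * a > 0" "1 - e * s > 0"
  shows "((\<lambda>e. F a K e s) has_real_derivative F1 a K e s) (at e)"
proof -
  define w where "w = sqrt (1 - e * a)"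
  define v where "v = 1 - e * s"
  have w: "w > 0" using assms by (simp add: w_def)
  have v: "v > 0" using assms by (simp add: v_def)
  have d: "((\<lambda>e. sqrt(1 - e * a)^3 / (1 - e * s)^2) has_real_derivative (-(3/2) * a * w / v^2 + 2 * s * w^3 / v^3)) (at e)"
    apply (rule derivative_eq_intros refl | use assms in force)+
    unfolding w_def[symmetric] v_def[symmetric]
    using w v by (simp add: field_simps power2_eq_square power3_eq_cube eval_nat_numeral)
  have eqf: "(\<lambda>e. F a K e s) = (\<lambda>e. K * (sqrt(1 - e * a)^3 / (1 - e * s)^2))"
    by (simp add: F_def)
  have "((\<lambda>e. K * (sqrt(1 - e * a)^3 / (1 - e * s)^2)) has_real_derivative K * (-(3/2) * a * w / v^2 + 2 * s * w^3 / v^3)) (at e)"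
    by (intro DERIV_cmult d)
  moreover have "K * (-(3/2) * a * w / v^2 + 2 * s * w^3 / v^3) = F1 a K e s"
    unfolding F1_def w_def[symmetric] v_def[symmetric] by simp
  ultimately show ?thesis unfolding eqf by simp
qed

lemma dF1: assumes "1 - e * a > 0" "1 - e * s > 0"
  shows "((\<lambda>e. F1 a K e s) has_real_derivative F2 a K e s) (at e)"
proof -
  define w where "w = sqrt (1 - e * a)"
  define v where "v = 1 - e * s"
  have w: "w > 0" using assms by (simp add: w_def)
  have v: "v > 0" using assms by (simp add: v_def)
  have d1: "((\<lambda>e. sqrt(1 - e * a) / (1 - e * s)^2) has_real_derivative (-(a/2)/(w * v^2) + 2 * s * w/v^3)) (at e)"
    apply (rule derivative_eq_intros refl | use assms in force)+
    unfolding w_def[symmetric] v_def[symmetric]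
    using w v by (simp add: field_simps power2_eq_square power3_eq_cube)
  have d2: "((\<lambda>e. sqrt(1 - e * a)^3 / (1 - e * s)^3) has_real_derivative (-(3/2) * a * w/v^3 + 3 * s * w^3/v^4)) (at e)"
    apply (rule derivative_eq_intros refl | use assms in force)+
    unfolding w_def[symmetric] v_def[symmetric]
    using w v by (simp add: field_simps power2_eq_square power3_eq_cube eval_nat_numeral)
  have eqf: "(\<lambda>e. F1 a K e s) = (\<lambda>e. K * (-(3/2) * a * (sqrt(1 - e * a) / (1 - e * s)^2) + 2 * s * (sqrt(1 - e * a)^3 / (1 - e * s)^3)))"
    by (simp add: F1_def)
  have "((\<lambda>e. K * (-(3/2) * a * (sqrt(1 - e * a) / (1 - e * s)^2) + 2 * s * (sqrt(1 - e * a)^3 / (1 - e * s)^3)))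
     has_real_derivative K * (-(3/2) * a * (-(a/2)/(w * v^2) + 2 * s * w/v^3) + 2 * s * (-(3/2) * a * w/v^3 + 3 * s * w^3/v^4))) (at e)"
    by (intro DERIV_cmult DERIV_add d1 d2)
  moreover have "K * (-(3/2) * a * (-(a/2)/(w * v^2) + 2 * s * w/v^3) + 2 * s * (-(3/2) * a * w/v^3 + 3 * s * w^3/v^4)) = F2 a K e s"
    unfolding F2_def w_def[symmetric] v_def[symmetric] by (simp add: algebra_simps power2_eq_square)
  ultimately show ?thesis unfolding eqf by simp
qed

lemma F2_pos: assumes "1 - e * a > 0" "1 - e * s > 0" "0 < a" "a \<le> s" "K > 0"
  shows "F2 a K e s > 0"
proof -
  define v where "v = 1 - e * s"
  define w where "w = sqrt (1 - e * a)"
  have v: "v > 0" using assms by (auto simp: v_def)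
  have w: "w > 0" "w * w = 1 - e * a" using assms by (auto simp: w_def)
  have xy: "a * v \<le> s * (w * w)" unfolding w(2) v_def using assms by (simp add: algebra_simps)
  have av: "a * v > 0" using assms v by simp
  have D: "w * v ^ 4 > 0" using v w by simp
  have t1: "(3/4) * a^2 / w / v^2 = ((3/4) * (a * v)^2) / (w * v ^ 4)"
    using v w by (simp add: divide_simps eval_nat_numeral)
  have t2: "6 * a * s * w / v^3 = (6 * (s * (w * w)) * (a * v)) / (w * v ^ 4)"
    using v w by (simp add: divide_simps eval_nat_numeral)
  have t3: "6 * s^2 * w^3 / v^4 = (6 * (s * (w * w)) * (s * (w * w))) / (w * v ^ 4)"
    using v w by (simp add: divide_simps eval_nat_numeral)
  have eq: "F2 a K e s = K * (((3/4) * (a * v)^2 - 6 * (s * (w * w)) * (a * v) + 6 * (s * (w * w)) * (s * (w * w))) / (w * v ^ 4))"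
    unfolding F2_def v_def[symmetric] w_def[symmetric] t1 t2 t3
    by (simp add: diff_divide_distrib add_divide_distrib)
  have "(3/4) * (a * v)^2 - 6 * (s * (w * w)) * (a * v) + 6 * (s * (w * w)) * (s * (w * w)) > 0"
  proof -
    have "s * (w * w) - a * v \<ge> 0" "s * (w * w) > 0" using xy av by linarith+
    hence "6 * (s * (w * w)) * ((s * (w * w)) - a * v) \<ge> 0" by simp
    moreover have "(a * v)^2 > 0" using av by (intro zero_less_power)
    hence "(3/4) * (a * v)^2 > 0" by simp
    ultimately show ?thesis by (simp add: algebra_simps)
  qed
  thus ?thesis unfolding eq using D assms by simp
qed

lemma vpos: fixes e s :: real assumes "e < 1" "0 \<le> s" "s \<le> 1" shows "1 - e * s > 0"
proof (cases "e \<le> 0")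
  case True thus ?thesis using assms by (smt (verit) mult_nonpos_nonneg)
next
  case False
  hence "e * s \<le> e * 1" using assms by (intro mult_left_mono) auto
  thus ?thesis using assms by simp
qed

lemma powr32: fixes x :: real assumes "x > 0" shows "x powr (3/2) = sqrt x ^ 3"
proof -
  have "x powr (3/2) = x powr (1/2 + 1/2 + 1/2)" by simp
  also have "\<dots> = x powr (1/2) * x powr (1/2) * x powr (1/2)"
    by (simp only: powr_add)
  finally have "x powr (3/2) = x powr (1/2) * x powr (1/2) * x powr (1/2)" .
  thus ?thesis using assms by (simp add: powr_half_sqrt power3_eq_cube)
qed

lemma leib:
  fixes G G' :: "real \<Rightarrow> real \<Rightarrow> real" and c d e0 :: real
  assumes der: "\<And>e t. e < 1 \<Longrightarrow> t \<in> {c..d} \<Longrightarrow> ((\<lambda>e. G e t) has_real_derivative G' e t) (at e)"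
    and cG: "\<And>e. e < 1 \<Longrightarrow> continuous_on {c..d} (G e)"
    and cG': "continuous_on ({..<1} \<times> {c..d}) (\<lambda>p. G' (fst p) (snd p))"
    and e0: "e0 < 1"
  shows "((\<lambda>e. integral {c..d} (G e)) has_real_derivative integral {c..d} (G' e0)) (at e0)"
proof -
  have cb: "cbox c d = {c..d}" by (rule box_real(2))
  have "((\<lambda>e. integral (cbox c d) (G e)) has_real_derivative integral (cbox c d) (G' e0)) (at e0 within {..<1})"
  proof (rule leibniz_rule_field_derivative)
    show "((\<lambda>e. G e t) has_real_derivative G' x t) (at x within {..<1})" if "x \<in> {..<1}" "t \<in> cbox c d" for x t
    proof (rule has_field_derivative_at_within)
      show "((\<lambda>e. G e t) has_real_derivative G' x t) (at x)"
        using that unfolding cb by (intro der) auto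
    qed
    show "G x integrable_on cbox c d" if "x \<in> {..<1}" for x
      unfolding cb by (rule integrable_continuous_interval, rule cG) (use that in simp)
    have "(\<lambda>(x, t). G' x t) = (\<lambda>p. G' (fst p) (snd p))" by (simp add: case_prod_beta')
    thus "continuous_on ({..<1} \<times> cbox c d) (\<lambda>(x, t). G' x t)"
      using cG' unfolding cb by simp
    show "e0 \<in> {..<1}" using e0 by simp
    show "convex {..<1::real}" by simp
  qed
  moreover have "at e0 within {..<1} = at e0" by (rule at_within_open) (use e0 in auto)
  ultimately show ?thesis unfolding cb by simp
qed

theorem proposition5:
  fixes rA thA :: real
  assumes "rA > 0" and "0 < thA" and "thA < pi / 2"
  shows "strictly_convex_on {..<1} (TDS rA thA) \<and>
    (\<exists>T' T'' :: real \<Rightarrow> real. \<forall>eta < 1.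
       (TDS rA thA has_real_derivative T' eta) (at eta) \<and>
       (T' has_real_derivative T'' eta) (at eta) \<and>
       T'' eta > 0)"
proof -
  define a where "a = sin thA"
  define K where "K = rA powr (3/2)"
  define c where "c = thA"
  define d where "d = pi - thA"
  have K: "K > 0" using assms by (simp add: K_def)
  have a0: "a > 0" unfolding a_def using assms by (intro sin_gt_zero) auto
  have a1: "a < 1" unfolding a_def using assms sin_monotone_2pi[of thA "pi/2"] by simp
  have cd: "c < d" using assms by (simp add: c_def d_def)
  have sinI: "a \<le> sin t \<and> sin t \<le> 1" if "t \<in> {c..d}" for t
    using sin_ge_thA[of thA t] assms that by (simp add: a_def c_def d_def)
  have ua: "1 - e * a > 0" if "e < 1" for e using vpos[of e a] that a0 a1 by simp
  have vs: "1 - e * sin t > 0" if "e < 1" "t \<in> {c..d}" for e t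
    using vpos[of e "sin t"] that sinI[OF that(2)] a0 by simp
  define T where "T = (\<lambda>e. integral {c..d} (\<lambda>t. F a K e (sin t)))"
  define T' where "T' = (\<lambda>e. integral {c..d} (\<lambda>t. F1 a K e (sin t)))"
  define T'' where "T'' = (\<lambda>e. integral {c..d} (\<lambda>t. F2 a K e (sin t)))"
  have TT: "TDS rA thA e = T e" if "e < 1" for e
  proof -
    have "(\<lambda>\<theta>. rA powr (3/2) * (1 - e * sin thA) powr (3/2) / (1 - e * sin \<theta>)\<^sup>2)
       = (\<lambda>t. F a K e (sin t))"
      using powr32[OF ua[OF that]] by (simp add: F_def a_def K_def)
    thus ?thesis unfolding TDS_def T_def c_def d_def by simp
  qed
  have cont_pair: "continuous_on ({..<1} \<times> {c..d}) (\<lambda>p. H a K (fst p) (sin (snd p)))"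
    if "H = F \<or> H = F1 \<or> H = F2" for H
  proof -
    have nz: "\<And>e b. e < 1 \<Longrightarrow> c \<le> b \<Longrightarrow> b \<le> d \<Longrightarrow> e * sin b \<noteq> 1"
      using vs by force
    have nz2: "\<And>e. e < 1 \<Longrightarrow> e * a \<noteq> 1"
      using ua by force
    show ?thesis using that
      apply (auto simp: F_def F1_def F2_def intro!: continuous_intros)
      using nz nz2 by auto
  qed
  have cont1: "continuous_on {c..d} (\<lambda>t. H a K e (sin t))"
    if "H = F \<or> H = F1 \<or> H = F2" "e < 1" for H e
  proof -
    have "continuous_on ((\<lambda>t. (e, t)) ` {c..d}) (\<lambda>p. H a K (fst p) (sin (snd p)))"
      by (rule continuous_on_subset[OF cont_pair[OF that(1)]]) (use that in auto)
    hence "continuous_on {c..d} ((\<lambda>p. H a K (fst p) (sin (snd p))) \<circ> (\<lambda>t. (e, t)))"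
      by (intro continuous_on_compose continuous_intros)
    thus ?thesis by (simp add: o_def)
  qed
  have D1: "(T has_real_derivative T' e) (at e)" if "e < 1" for e
    unfolding T_def T'_def
  proof (rule leib[where G="\<lambda>e t. F a K e (sin t)" and G'="\<lambda>e t. F1 a K e (sin t)", OF _ _ _ that])
    show "((\<lambda>e. F a K e (sin t)) has_real_derivative F1 a K e (sin t)) (at e)" if "e < 1" "t \<in> {c..d}" for e t
      by (rule dF[OF ua[OF that(1)] vs[OF that]])
    show "continuous_on {c..d} (\<lambda>t. F a K e (sin t))" if "e < 1" for e
      by (rule cont1[OF disjI1[OF refl] that])
    show "continuous_on ({..<1} \<times> {c..d}) (\<lambda>p. F1 a K (fst p) (sin (snd p)))"
      by (rule cont_pair) simp
  qed
  have D2: "(T' has_real_derivative T'' e) (at e)" if "e < 1" for e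
    unfolding T'_def T''_def
  proof (rule leib[where G="\<lambda>e t. F1 a K e (sin t)" and G'="\<lambda>e t. F2 a K e (sin t)", OF _ _ _ that])
    show "((\<lambda>e. F1 a K e (sin t)) has_real_derivative F2 a K e (sin t)) (at e)" if "e < 1" "t \<in> {c..d}" for e t
      by (rule dF1[OF ua[OF that(1)] vs[OF that]])
    show "continuous_on {c..d} (\<lambda>t. F1 a K e (sin t))" if "e < 1" for e
      by (rule cont1[OF _ that]) simp
    show "continuous_on ({..<1} \<times> {c..d}) (\<lambda>p. F2 a K (fst p) (sin (snd p)))"
      by (rule cont_pair) simp
  qed
  have P: "T'' e > 0" if e1: "e < 1" for e
  proof -
    obtain t0 where t0: "t0 \<in> {c..d}" "\<forall>t\<in>{c..d}. F2 a K e (sin t0) \<le> F2 a K e (sin t)"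
    proof -
      have cF2: "continuous_on {c..d} (\<lambda>t. F2 a K e (sin t))" by (rule cont1[OF _ e1]) simp
      obtain x where "x \<in> {c..d}" "\<forall>y\<in>{c..d}. F2 a K e (sin x) \<le> F2 a K e (sin y)"
        using continuous_attains_inf[OF _ _ cF2] cd by auto
      thus ?thesis by (rule that)
    qed
    have m: "F2 a K e (sin t0) > 0"
      using F2_pos[OF ua[OF that] vs[OF that t0(1)] a0 _ K] sinI[OF t0(1)] by simp
    have "integral {c..d} (\<lambda>t. F2 a K e (sin t0)) \<le> T'' e"
      unfolding T''_def
    proof (rule integral_le)
      have cF2: "continuous_on {c..d} (\<lambda>t. F2 a K e (sin t))" by (rule cont1[OF _ that]) simp
      thus "(\<lambda>t. F2 a K e (sin t)) integrable_on {c..d}" by (rule integrable_continuous_interval)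
      show "(\<lambda>t. F2 a K e (sin t0)) integrable_on {c..d}" by (rule integrable_continuous_interval) simp
      show "F2 a K e (sin t0) \<le> F2 a K e (sin x)" if "x \<in> {c..d}" for x using t0 that by blast
    qed
    moreover have "integral {c..d} (\<lambda>t. F2 a K e (sin t0)) > 0"
      using cd m by (simp add: content_real)
    ultimately show ?thesis by linarith
  qed
  have D0: "(TDS rA thA has_real_derivative T' e) (at e)" if "e < 1" for e
    by (rule has_field_derivative_transform_within_open[OF D1[OF that], of "{..<1}"])
       (use that TT in auto)
  show ?thesis
  proof
    show "strictly_convex_on {..<1} (TDS rA thA)"
      by (rule convex_from_deriv[OF D0 D2 P])
    show "\<exists>T' T''. \<forall>eta<1. (TDS rA thA has_real_derivative T' eta) (at eta) \<and>
       (T' has_real_derivative T'' eta) (at eta) \<and> T'' eta > 0"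
      using D0 D2 P by blast
  qed
qed

end
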